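(* Let $f:[0,\infty)\to\mathbb{C}$ be smooth with support in $[0,\rho]$ for some $\rho<1$, and for $j\in\mathbb{N}_0$, $t\in(0,1)$ let $$G_{0,j}(t)=\int_{1-t}^{1}u f(u)\,(u^{2}+1-t^{2})^{j}\,\mathrm{d}u.$$ Then for every $r\geq 0$ and $t\in(0,1)$, $$\left[\frac{\mathrm{d}}{\mathrm{d} t}D^{r}G_{0,r}\right](t)=2^{r}(-1)^{r}r!\sum_{m=0}^{r}\sum_{\nu=m}^{r}\sum_{l=\nu}^{r}\frac{1}{2^{\nu-m}m!}\binom{l+1}{\nu+1}\binom{l+\nu-m}{\nu-m}\frac{1}{t^{l}}\frac{(1-t)^{\nu+1}}{t^{\nu-m}}f^{(m)}(1-t).$$
   Context: $D$ denotes the operator $(D\varphi)(t)=\frac{1}{t}\varphi'(t)$ and $D^{r}$ its $r$-fold iterate ($D^0$ is the identity). $\binom{a}{b}=0$ if $b>a$ or $b<0$. *)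

theory Defs
  imports "HOL-Analysis.Analysis"
begin

definition Dop :: "(real \<Rightarrow> complex) \<Rightarrow> real \<Rightarrow> complex" where
  "Dop \<phi> = (\<lambda>t. (1 / t) *\<^sub>R vector_derivative \<phi> (at t))"

definition G0 :: "(real \<Rightarrow> complex) \<Rightarrow> nat \<Rightarrow> real \<Rightarrow> complex" where
  "G0 f j t = integral {1 - t..1} (\<lambda>u. complex_of_real (u * (u\<^sup>2 + 1 - t\<^sup>2) ^ j) * f u)"

end

theory Submission
  imports Defs
begin

lemma hvd_scaleR_const: "(f has_vector_derivative f') F \<Longrightarrow> ((\<lambda>x. c *\<^sub>R f x) has_vector_derivative c *\<^sub>R f') F"
  by (rule bounded_linear.has_vector_derivative[OF bounded_linear_scaleR_right])

fun ffr :: "nat \<Rightarrow> nat \<Rightarrow> real" where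
  "ffr n 0 = 1"
| "ffr n (Suc p) = ffr n p * (real n - real p)"

lemma ffr_zero: "p > n \<Longrightarrow> ffr n p = 0"
proof (induction p)
  case 0 then show ?case by simp
next
  case (Suc p)
  then show ?case by (cases "p = n") auto
qed

lemma ffr_Suc': "ffr n p * real (n - p) = ffr n (Suc p)"
  by (cases "p \<le> n") (auto simp: ffr_zero of_nat_diff)

lemma pascal_sum:
  fixes Y :: "nat \<Rightarrow> 'a::real_vector"
  shows "(\<Sum>p\<le>Suc n. real (Suc n choose p) *\<^sub>R Y p)
       = (\<Sum>p\<le>n. real (n choose p) *\<^sub>R Y (Suc p)) + (\<Sum>p\<le>n. real (n choose p) *\<^sub>R Y p)"
proof -
  have a: "(\<Sum>p\<le>Suc n. real (Suc n choose p) *\<^sub>R Y p)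
      = Y 0 + (\<Sum>p\<le>n. real (Suc n choose Suc p) *\<^sub>R Y (Suc p))"
    by (subst sum.atMost_Suc_shift) simp
  have b: "(\<Sum>p\<le>n. real (Suc n choose Suc p) *\<^sub>R Y (Suc p)) = (\<Sum>p\<le>n. real (n choose p) *\<^sub>R Y (Suc p)) + (\<Sum>p\<le>n. real (n choose Suc p) *\<^sub>R Y (Suc p))"
    by (simp add: scaleR_add_left sum.distrib)
  have c: "Y 0 + (\<Sum>p\<le>n. real (n choose Suc p) *\<^sub>R Y (Suc p)) = (\<Sum>p\<le>Suc n. real (n choose p) *\<^sub>R Y p)"
    by (subst sum.atMost_Suc_shift) simp
  have d: "(\<Sum>p\<le>Suc n. real (n choose p) *\<^sub>R Y p) = (\<Sum>p\<le>n. real (n choose p) *\<^sub>R Y p)"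
    by simp
  show ?thesis using a b c d by (simp add: algebra_simps)
qed

fun W :: "nat \<Rightarrow> nat \<Rightarrow> real" where
  "W 0 q = (if q = 0 then 1 else 0)"
| "W (Suc k) q = W k q + (if q = 0 then 0 else (real k + real q) * W k (q - 1))"

lemma W_zero: "q > k \<Longrightarrow> W k q = 0"
  by (induction k arbitrary: q) auto

definition HH :: "(nat \<Rightarrow> real \<Rightarrow> complex) \<Rightarrow> nat \<Rightarrow> real \<Rightarrow> complex" where
  "HH A k s = (\<Sum>q\<le>k. ((-1)^q * W k q / s^(1+k+q)) *\<^sub>R A (k-q) s)"

lemma inv_pow_deriv: "s \<noteq> 0 \<Longrightarrow> ((\<lambda>s. c / s^n) has_field_derivative (- real n * c / s^(Suc n))) (at s)"
  apply (auto intro!: derivative_eq_intros)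
  apply (cases n) apply (auto simp: field_simps)
  done

lemma HH_deriv:
  assumes A: "\<And>n. (A n has_vector_derivative A (Suc n) s) (at s)" and s: "s \<noteq> 0"
  shows "(HH A k has_vector_derivative s *\<^sub>R HH A (Suc k) s) (at s)"
proof -
  have d: "((\<lambda>s. ((-1)^q * W k q / s^(1+k+q)) *\<^sub>R A (k-q) s) has_vector_derivative
      ((-1)^q * W k q / s^(1+k+q)) *\<^sub>R A (Suc (k-q)) s + (- real (1+k+q) * ((-1)^q * W k q) / s^(Suc (1+k+q))) *\<^sub>R A (k-q) s) (at s)" for q
    by (intro has_vector_derivative_scaleR A inv_pow_deriv s)
  have D: "(HH A k has_vector_derivative (\<Sum>q\<le>k. ((-1)^q * W k q / s^(1+k+q)) *\<^sub>R A (Suc (k-q)) s + (- real (1+k+q) * ((-1)^q * W k q) / s^(Suc (1+k+q))) *\<^sub>R A (k-q) s)) (at s)"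
    unfolding HH_def[abs_def] by (intro has_vector_derivative_sum d)
  have "s *\<^sub>R HH A (Suc k) s = (\<Sum>q\<le>Suc k. (s * (-1)^q * W k q / s^(2+k+q)) *\<^sub>R A (Suc k - q) s)
      + (\<Sum>q\<le>Suc k. (if q = 0 then 0 else s * (-1)^q * ((real k + real q) * W k (q - 1)) / s^(2+k+q)) *\<^sub>R A (Suc k - q) s)"
    unfolding HH_def scaleR_sum_right sum.distrib[symmetric]
  proof (intro sum.cong refl)
    fix q assume "q \<in> {..Suc k}"
    have "s * ((-1)^q * W (Suc k) q / s^(1+Suc k+q)) = s * (-1)^q * W k q / s^(2+k+q)
       + (if q = 0 then 0 else s * (-1)^q * ((real k + real q) * W k (q - 1)) / s^(2+k+q))"
      by (simp add: field_simps)
    then show "s *\<^sub>R ((-1)^q * W (Suc k) q / s^(1+Suc k+q)) *\<^sub>R A (Suc k - q) s =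
      (s * (-1)^q * W k q / s^(2+k+q)) *\<^sub>R A (Suc k - q) s
      + (if q = 0 then 0 else s * (-1)^q * ((real k + real q) * W k (q - 1)) / s^(2+k+q)) *\<^sub>R A (Suc k - q) s"
      by (simp only: scaleR_scaleR scaleR_add_left[symmetric])
  qed
  also have "(\<Sum>q\<le>Suc k. (s * (-1)^q * W k q / s^(2+k+q)) *\<^sub>R A (Suc k - q) s)
     = (\<Sum>q\<le>k. ((-1)^q * W k q / s^(1+k+q)) *\<^sub>R A (Suc (k-q)) s)"
    using s by (simp add: W_zero Suc_diff_le)
  also have "(\<Sum>q\<le>Suc k. (if q = 0 then 0 else s * (-1)^q * ((real k + real q) * W k (q - 1)) / s^(2+k+q)) *\<^sub>R A (Suc k - q) s)
     = (\<Sum>q\<le>k. (- real (1+k+q) * ((-1)^q * W k q) / s^(Suc (1+k+q))) *\<^sub>R A (k-q) s)"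
    using s by (subst sum.atMost_Suc_shift) (auto intro!: sum.cong simp: field_simps)
  finally show ?thesis using D by (simp add: sum.distrib)
qed


lemma ffr_fact: "p \<le> n \<Longrightarrow> ffr n p = fact n / fact (n-p)"
proof (induction p)
  case 0 then show ?case by simp
next
  case (Suc p)
  then have e: "n - p = Suc (n - Suc p)" by simp
  have "fact (n-p) = real (n-p) * fact (n - Suc p)" unfolding e by simp
  with Suc show ?case by (simp add: of_nat_diff field_simps)
qed

lemma W0: "W k 0 = 1"
  by (induction k) auto

lemma W_closed: "q \<le> l \<Longrightarrow> W l q * (fact (l-q) * fact q * 2^q) = fact (l+q)"
proof (induction l arbitrary: q)
  case 0 then show ?case by simp
next
  case (Suc l)
  show ?case
  proof (cases q)
    case 0 then show ?thesis by (simp add: W0)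
  next
    case (Suc q')
    with Suc.prems have q'l: "q' \<le> l" by simp
    have t1: "W l (Suc q') * (fact (l-q') * fact (Suc q') * 2^(Suc q')) = real (l-q') * fact (l + Suc q')"
    proof (cases "q' = l")
      case True then show ?thesis by (simp add: W_zero)
    next
      case False
      then have "Suc q' \<le> l" using q'l by simp
      then have IH: "W l (Suc q') * (fact (l - Suc q') * fact (Suc q') * 2^(Suc q')) = fact (l + Suc q')"
        by (rule Suc.IH)
      have e: "l - q' = Suc (l - Suc q')" using \<open>Suc q' \<le> l\<close> by simp
      have "fact (l-q') = real (l-q') * fact (l - Suc q')" unfolding e by simp
      then have A: "W l (Suc q') * (fact (l-q') * fact (Suc q') * 2^(Suc q'))
          = real (l-q') * (W l (Suc q') * (fact (l - Suc q') * fact (Suc q') * 2^(Suc q')))"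
        by (simp only: ac_simps)
      show ?thesis unfolding A IH ..
    qed
    have t2: "W l q' * (fact (l-q') * fact q' * 2^q') = fact (l + q')"
      by (rule Suc.IH[OF q'l])
    have "W (Suc l) q * (fact (Suc l - q) * fact q * 2^q)
       = W l (Suc q') * (fact (l-q') * fact (Suc q') * 2^(Suc q'))
         + (real l + real (Suc q')) * (2 * real (Suc q')) * (W l q' * (fact (l-q') * fact q' * 2^q'))"
      using Suc by (simp add: algebra_simps)
    also have "\<dots> = real (l-q') * fact (l + Suc q') + (real l + real (Suc q')) * (2 * real (Suc q')) * fact (l+q')"
      unfolding t1 t2 ..
    also have "\<dots> = fact (Suc l + q)"
      using Suc q'l by (simp add: of_nat_diff algebra_simps)
    finally show ?thesis .
  qed
qed



definition Xc :: "real \<Rightarrow> nat \<Rightarrow> nat \<Rightarrow> nat \<Rightarrow> real" where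
  "Xc t m n l = 1 / (2 ^ (n - m) * fact m)
           * real ((l + 1) choose (n + 1)) * real ((l + n - m) choose (n - m))
           * (1 / t ^ l) * ((1 - t) ^ (n + 1) / t ^ (n - m))"

lemma scal:
  assumes t: "t \<noteq> 0" and pq: "p + q \<le> l"
  shows "t * ((-1)^q * W l q / t^(1+l+q)) * (-1)^(l-q) * (real ((l-q) choose p) * ffr (l+1) p * (1-t)^(l+1-p))
       = (-1)^l * fact l * Xc t (l-q-p) (l-p) l"
proof -
  define a where "a = l - (p + q)"
  have l: "l = a + p + q" using pq unfolding a_def by simp
  have W0: "W l q = fact (l+q) / (fact (l-q) * fact q * 2^q)"
    using W_closed[of q l] pq by (simp add: eq_divide_eq)
  have W: "W l q = fact (a+p+2*q) / (fact (a+p) * fact q * 2^q)"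
    unfolding W0 using l by (simp add: mult_2 add_ac)
  have f: "ffr (l+1) p = fact (a+p+q+1) / fact (a+q+1)"
    using ffr_fact[of p "l+1"] l by simp
  have c1: "real ((l-q) choose p) = fact (a+p) / (fact p * fact a)"
    using binomial_fact[of p "a+p"] l by simp
  have c2: "real ((l + 1) choose (l - p + 1)) = fact (a+p+q+1) / (fact (a+q+1) * fact p)"
    using binomial_fact[of "a+q+1" "a+p+q+1"] l by (simp add: add_ac)
  have c3: "real ((l + (l-p) - (l-q-p)) choose ((l-p) - (l-q-p))) = fact (a+p+2*q) / (fact q * fact (a+p+q))"
    using binomial_fact[of q "a+p+2*q"] l by (simp add: add_ac mult_2)
  have e1: "l-q-p = a" "(l-p) - (l-q-p) = q" "l+1-p = a+q+1" "l - p + 1 = a+q+1" "l - q = a + p" using l by auto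
  have s: "(-1::real)^q * (-1)^(l-q) = (-1)^l" using pq by (simp add: power_add[symmetric])
  have gen: "\<And>A B Q P2 Pf Af C D L T1 Tq U sg sg2 :: real. t * T1 * Tq \<noteq> 0 \<Longrightarrow> B \<noteq> 0 \<Longrightarrow> Q \<noteq> 0 \<Longrightarrow> P2 \<noteq> 0 \<Longrightarrow>
     Pf \<noteq> 0 \<Longrightarrow> Af \<noteq> 0 \<Longrightarrow> D \<noteq> 0 \<Longrightarrow> L \<noteq> 0 \<Longrightarrow>
     t * (sg * (A / (B * Q * P2)) / (t * T1 * Tq)) * sg2 * (B / (Pf * Af) * (C / D) * U)
     = (sg * sg2) * L * (1 / (P2 * Af) * (C / (D * Pf)) * (A / (Q * L)) * (1 / T1) * (U / Tq))"
    by (simp add: field_simps)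
  have tp: "t^(1+l+q) = t * t^l * t^q" by (simp add: power_add)
  have L: "fact l = (fact (a+p+q) :: real)" using l by simp
  show ?thesis
    unfolding Xc_def W f c1 c2 c3 tp s[symmetric] L
    unfolding e1(2)
    unfolding e1(1) e1(3) e1(4)
    by (rule gen) (use t in auto)
qed

lemma swap3:
  fixes Y :: "nat \<Rightarrow> nat \<Rightarrow> nat \<Rightarrow> 'a::comm_monoid_add"
  shows "(\<Sum>l\<le>r. \<Sum>m=0..l. \<Sum>n=m..l. Y m n l) = (\<Sum>m=0..r. \<Sum>n=m..r. \<Sum>l=n..r. Y m n l)"
proof -
  have L: "(\<Sum>l\<le>r. \<Sum>m=0..l. \<Sum>n=m..l. Y m n l) = (\<Sum>(l,m,n)\<in>(SIGMA l:{..r}. SIGMA m:{0..l}. {m..l}). Y m n l)"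
    by (simp add: sum.Sigma)
  have R: "(\<Sum>m=0..r. \<Sum>n=m..r. \<Sum>l=n..r. Y m n l) = (\<Sum>(m,n,l)\<in>(SIGMA m:{0..r}. SIGMA n:{m..r}. {n..r}). Y m n l)"
    by (simp add: sum.Sigma)
  have "(\<Sum>(l,m,n)\<in>(SIGMA l:{..r}. SIGMA m:{0..l}. {m..l}). Y m n l) = (\<Sum>(m,n,l)\<in>(SIGMA m:{0..r}. SIGMA n:{m..r}. {n..r}). Y m n l)"
    by (rule sum.reindex_bij_witness[where i="\<lambda>(m,n,l). (l,m,n)" and j="\<lambda>(l,m,n). (m,n,l)"]) auto
  then show ?thesis using L R by simp
qed

locale L =
  fixes fd :: "nat \<Rightarrow> real \<Rightarrow> complex"
  assumes fdd: "\<And>n x. x > 0 \<Longrightarrow> (fd n has_vector_derivative fd (Suc n) x) (at x)"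
    and gcont: "continuous_on {0..} (fd 0)"
begin

lemma fd1: "s < 1 \<Longrightarrow> ((\<lambda>s. fd n (1 - s)) has_vector_derivative - fd (Suc n) (1 - s)) (at s)"
proof -
  assume s: "s < 1"
  have "((fd n \<circ> (\<lambda>s. 1 - s)) has_vector_derivative (-1) *\<^sub>R fd (Suc n) (1 - s)) (at s)"
    by (rule vector_diff_chain_at) (auto intro!: derivative_eq_intros fdd simp: s)
  then show ?thesis by (simp add: o_def)
qed

definition Af :: "nat \<Rightarrow> nat \<Rightarrow> real \<Rightarrow> complex" where
  "Af j n s = ((-1)^n) *\<^sub>R (\<Sum>p\<le>n. (real (n choose p) * ffr (j+1) p * (1-s)^(j+1-p)) *\<^sub>R fd (n-p) (1-s))"

lemma Af_deriv:
  assumes s: "s < 1"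
  shows "(Af j n has_vector_derivative Af j (Suc n) s) (at s)"
proof -
  define Y where "Y p = (ffr (j+1) p * (1-s)^(j+1-p)) *\<^sub>R fd (Suc n - p) (1-s)" for p
  have d: "((\<lambda>s. (real (n choose p) * ffr (j+1) p * (1-s)^(j+1-p)) *\<^sub>R fd (n-p) (1-s)) has_vector_derivative
      (real (n choose p) * ffr (j+1) p * (1-s)^(j+1-p)) *\<^sub>R (- fd (Suc (n-p)) (1-s))
      + (real (n choose p) * ffr (j+1) p * (real (j+1-p) * (1-s)^(j+1-p-1) * (-1))) *\<^sub>R fd (n-p) (1-s)) (at s)" for p
    by (auto intro!: derivative_eq_intros fd1 s)
  have "(Af j n has_vector_derivative ((-1)^n) *\<^sub>R (\<Sum>p\<le>n.
      (real (n choose p) * ffr (j+1) p * (1-s)^(j+1-p)) *\<^sub>R (- fd (Suc (n-p)) (1-s))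
      + (real (n choose p) * ffr (j+1) p * (real (j+1-p) * (1-s)^(j+1-p-1) * (-1))) *\<^sub>R fd (n-p) (1-s))) (at s)"
    unfolding Af_def[abs_def]
    by (intro hvd_scaleR_const has_vector_derivative_sum d)
  moreover have "((-1)^n) *\<^sub>R (\<Sum>p\<le>n.
      (real (n choose p) * ffr (j+1) p * (1-s)^(j+1-p)) *\<^sub>R (- fd (Suc (n-p)) (1-s))
      + (real (n choose p) * ffr (j+1) p * (real (j+1-p) * (1-s)^(j+1-p-1) * (-1))) *\<^sub>R fd (n-p) (1-s))
      = Af j (Suc n) s"
  proof -
    have e1: "(\<Sum>p\<le>n. (real (n choose p) * ffr (j+1) p * (1-s)^(j+1-p)) *\<^sub>R (fd (Suc (n-p)) (1-s)))
        = (\<Sum>p\<le>n. real (n choose p) *\<^sub>R Y p)"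
      by (intro sum.cong refl) (simp add: Y_def Suc_diff_le)
    have e2: "(\<Sum>p\<le>n. (real (n choose p) * ffr (j+1) p * (real (j+1-p) * (1-s)^(j+1-p-1)))  *\<^sub>R fd (n-p) (1-s))
        = (\<Sum>p\<le>n. real (n choose p) *\<^sub>R Y (Suc p))"
    proof (intro sum.cong refl)
      fix p
      have "(real (n choose p) * ffr (j+1) p * (real (j+1-p) * (1-s)^(j+1-p-1)))  *\<^sub>R fd (n-p) (1-s)
        = real (n choose p) *\<^sub>R ((ffr (j+1) p * real (j+1-p)) * (1-s)^(j+1-Suc p)) *\<^sub>R fd (Suc n - Suc p) (1-s)"
        by (simp del: of_nat_diff ffr.simps add: ac_simps)
      then show "(real (n choose p) * ffr (j+1) p * (real (j+1-p) * (1-s)^(j+1-p-1)))  *\<^sub>R fd (n-p) (1-s)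
        = real (n choose p) *\<^sub>R Y (Suc p)"
        unfolding Y_def ffr_Suc' by simp
    qed
    have e3: "Af j (Suc n) s = ((-1)^Suc n) *\<^sub>R (\<Sum>p\<le>Suc n. real (Suc n choose p) *\<^sub>R Y p)"
      unfolding Af_def Y_def by (simp add: scaleR_scaleR mult.assoc)
    have e4: "(\<Sum>p\<le>n.
      (real (n choose p) * ffr (j+1) p * (1-s)^(j+1-p)) *\<^sub>R (- fd (Suc (n-p)) (1-s))
      + (real (n choose p) * ffr (j+1) p * (real (j+1-p) * (1-s)^(j+1-p-1) * (-1))) *\<^sub>R fd (n-p) (1-s))
      = - ((\<Sum>p\<le>n. (real (n choose p) * ffr (j+1) p * (1-s)^(j+1-p)) *\<^sub>R (fd (Suc (n-p)) (1-s)))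
        + (\<Sum>p\<le>n. (real (n choose p) * ffr (j+1) p * (real (j+1-p) * (1-s)^(j+1-p-1)))  *\<^sub>R fd (n-p) (1-s)))"
      by (simp add: sum_negf[symmetric] sum.distrib[symmetric] algebra_simps)
    show ?thesis
      unfolding e3 pascal_sum e4 e1 e2
      by (simp add: algebra_simps)
  qed
  ultimately show ?thesis by simp
qed

definition FF :: "nat \<Rightarrow> real \<Rightarrow> complex" where
  "FF i x = integral {x..1} (\<lambda>u. (u^(2*i+1)) *\<^sub>R fd 0 u)"

definition Gx :: "nat \<Rightarrow> real \<Rightarrow> complex" where
  "Gx j s = (\<Sum>i\<le>j. (real (j choose i) * (1-s^2)^(j-i)) *\<^sub>R FF i (1-s))"

lemma cont_int: "continuous_on {a..b} (\<lambda>u. (u^(2*i+1)) *\<^sub>R fd 0 u)" if "a \<ge> 0"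
  using that by (intro continuous_intros continuous_on_subset[OF gcont]) auto

lemma G0_eq:
  assumes f: "\<And>x. x \<ge> 0 \<Longrightarrow> fd 0 x = f x" and s: "0 < s" "s < 1"
  shows "G0 f j s = Gx j s"
proof -
  have "G0 f j s = integral {1-s..1} (\<lambda>u. \<Sum>i\<le>j. (real (j choose i) * (1-s^2)^(j-i)) *\<^sub>R ((u^(2*i+1)) *\<^sub>R fd 0 u))"
    unfolding G0_def
  proof (intro integral_cong)
    fix u assume u: "u \<in> {1-s..1}"
    have "u * (u\<^sup>2 + 1 - s\<^sup>2) ^ j = u * (u\<^sup>2 + (1 - s\<^sup>2)) ^ j" by (simp add: add_diff_eq)
    also have "\<dots> = (\<Sum>i\<le>j. real (j choose i) * (1-s^2)^(j-i) * u^(2*i+1))"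
      unfolding binomial_ring sum_distrib_left
      by (intro sum.cong refl) (simp add: power_add algebra_simps flip: power_mult)
    finally have "complex_of_real (u * (u\<^sup>2 + 1 - s\<^sup>2) ^ j) * f u
        = (\<Sum>i\<le>j. real (j choose i) * (1-s^2)^(j-i) * u^(2*i+1)) *\<^sub>R fd 0 u"
      using f[of u] u s by (simp add: scaleR_conv_of_real)
    then show "complex_of_real (u * (u\<^sup>2 + 1 - s\<^sup>2) ^ j) * f u =
         (\<Sum>i\<le>j. (real (j choose i) * (1-s^2)^(j-i)) *\<^sub>R ((u^(2*i+1)) *\<^sub>R fd 0 u))"
      by (simp add: scaleR_sum_left)
  qed
  also have "\<dots> = (\<Sum>i\<le>j. integral {1-s..1} (\<lambda>u. (real (j choose i) * (1-s^2)^(j-i)) *\<^sub>R ((u^(2*i+1)) *\<^sub>R fd 0 u)))"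
    using s by (intro integral_sum finite_atMost integrable_cmul integrable_continuous_interval cont_int) auto
  also have "\<dots> = Gx j s"
    unfolding Gx_def FF_def by (simp only: integral_cmul)
  finally show ?thesis .
qed

lemma FF_deriv:
  assumes x: "0 < x" "x < 1"
  shows "(FF i has_vector_derivative - ((x^(2*i+1)) *\<^sub>R fd 0 x)) (at x)"
proof -
  have "(FF i has_vector_derivative - ((x^(2*i+1)) *\<^sub>R fd 0 x)) (at x within {0..1})"
    unfolding FF_def[abs_def] using x
    by (intro integral_has_vector_derivative' cont_int) auto
  moreover have "at x within {0..1} = at x"
    using x by (intro at_within_interior) auto
  ultimately show ?thesis by simp
qed

lemma FF1_deriv:
  assumes s: "0 < s" "s < 1"
  shows "((\<lambda>s. FF i (1-s)) has_vector_derivative (((1-s)^(2*i+1)) *\<^sub>R fd 0 (1-s))) (at s)"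
proof -
  have "((FF i \<circ> (\<lambda>s. 1 - s)) has_vector_derivative (-1) *\<^sub>R (- (((1-s)^(2*i+1)) *\<^sub>R fd 0 (1-s)))) (at s)"
  proof (rule vector_diff_chain_at)
    show "((\<lambda>s. 1 - s) has_vector_derivative - 1) (at s)" by (auto intro!: derivative_eq_intros)
    show "(FF i has_vector_derivative - (((1-s)^(2*i+1)) *\<^sub>R fd 0 (1-s))) (at (1-s))"
      by (rule FF_deriv) (use s in auto)
  qed
  then show ?thesis by (simp add: o_def)
qed

lemma Gx_deriv:
  assumes s: "0 < s" "s < 1"
  shows "(Gx j has_vector_derivative ((2^j*(1-s)^(j+1)) *\<^sub>R fd 0 (1-s) - (2 * real j * s) *\<^sub>R Gx (j-1) s)) (at s)"
proof -
  have d: "((\<lambda>s. (real (j choose i) * (1-s^2)^(j-i)) *\<^sub>R FF i (1-s)) has_vector_derivative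
     (real (j choose i) * (1-s^2)^(j-i)) *\<^sub>R (((1-s)^(2*i+1)) *\<^sub>R fd 0 (1-s))
     + (real (j choose i) * (real (j-i) * (1-s^2)^(j-i-1) * (-2 * s))) *\<^sub>R FF i (1-s)) (at s)" for i
    by (intro has_vector_derivative_scaleR FF1_deriv s) (auto intro!: derivative_eq_intros)
  have D: "(Gx j has_vector_derivative (\<Sum>i\<le>j. (real (j choose i) * (1-s^2)^(j-i)) *\<^sub>R (((1-s)^(2*i+1)) *\<^sub>R fd 0 (1-s))
     + (real (j choose i) * (real (j-i) * (1-s^2)^(j-i-1) * (-2 * s))) *\<^sub>R FF i (1-s))) (at s)"
    unfolding Gx_def[abs_def] by (intro has_vector_derivative_sum d)
  have e1: "(\<Sum>i\<le>j. (real (j choose i) * (1-s^2)^(j-i)) *\<^sub>R (((1-s)^(2*i+1)) *\<^sub>R fd 0 (1-s)))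
      = (2^j*(1-s)^(j+1)) *\<^sub>R fd 0 (1-s)"
  proof -
    have "(\<Sum>i\<le>j. real (j choose i) * (1-s^2)^(j-i) * (1-s)^(2*i+1)) = (1-s) * ((1-s)^2 + (1-s^2))^j"
      unfolding binomial_ring sum_distrib_left
      by (intro sum.cong refl) (simp add: power_add algebra_simps flip: power_mult)
    also have "(1-s)^2 + (1-s^2) = 2 * (1-s)" by (simp add: power2_eq_square algebra_simps)
    also have "(1-s) * (2 * (1-s))^j = 2^j*(1-s)^(j+1)"
      by (subst power_mult_distrib) simp
    finally have "(\<Sum>i\<le>j. real (j choose i) * (1-s^2)^(j-i) * (1-s)^(2*i+1)) = 2^j*(1-s)^(j+1)" .
    then show ?thesis by (simp add: scaleR_sum_left[symmetric])
  qed
  have e2: "(\<Sum>i\<le>j. (real (j choose i) * (real (j-i) * (1-s^2)^(j-i-1) * (-2 * s))) *\<^sub>R FF i (1-s))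
      = - ((2 * real j * s) *\<^sub>R Gx (j-1) s)"
  proof (cases j)
    case 0 then show ?thesis by simp
  next
    case (Suc j')
    have "(\<Sum>i\<le>j. (real (j choose i) * (real (j-i) * (1-s^2)^(j-i-1) * (-2 * s))) *\<^sub>R FF i (1-s))
       = (\<Sum>i\<le>j'. (real (j choose i) * (real (j-i) * (1-s^2)^(j-i-1) * (-2 * s))) *\<^sub>R FF i (1-s))"
      using Suc by simp
    also have "\<dots> = (\<Sum>i\<le>j'. (- (2 * real j * s)) *\<^sub>R ((real (j' choose i) * (1-s^2)^(j'-i)) *\<^sub>R FF i (1-s)))"
    proof (intro sum.cong refl)
      fix i assume i: "i \<in> {..j'}"
      have "real (j choose i) * real (j-i) = real j * real (j' choose i)"
        using binomial_absorb_comp[of j i] Suc by (metis diff_Suc_1 mult.commute of_nat_mult)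
      moreover have "j - i - 1 = j' - i" using Suc by simp
      ultimately show "(real (j choose i) * (real (j-i) * (1-s^2)^(j-i-1) * (-2 * s))) *\<^sub>R FF i (1-s)
         = (- (2 * real j * s)) *\<^sub>R ((real (j' choose i) * (1-s^2)^(j'-i)) *\<^sub>R FF i (1-s))"
        by (simp add: scaleR_scaleR algebra_simps)
    qed
    finally show ?thesis unfolding Gx_def using Suc by (simp add: scaleR_sum_right sum_negf)
  qed
  show ?thesis using D unfolding sum.distrib e1 e2 by simp
qed


definition Hf :: "nat \<Rightarrow> nat \<Rightarrow> real \<Rightarrow> complex" where
  "Hf j k s = HH (Af j) k s"

lemma Hf_deriv: "0 < s \<Longrightarrow> s < 1 \<Longrightarrow> (Hf j k has_vector_derivative s *\<^sub>R Hf j (Suc k) s) (at s)"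
  unfolding Hf_def[abs_def] by (rule HH_deriv) (auto intro: Af_deriv)

lemma Hf0: "s \<noteq> 0 \<Longrightarrow> (2^j*(1-s)^(j+1)) *\<^sub>R fd 0 (1-s) = s *\<^sub>R (2^j *\<^sub>R Hf j 0 s)"
  unfolding Hf_def HH_def Af_def by simp

definition alpha :: "nat \<Rightarrow> nat \<Rightarrow> real" where
  "alpha j i = (-2)^i * ffr j i * 2^(j-i)"
definition beta :: "nat \<Rightarrow> nat \<Rightarrow> real" where
  "beta j k = (-2)^k * ffr j k"

definition Ek :: "nat \<Rightarrow> nat \<Rightarrow> real \<Rightarrow> complex" where
  "Ek j k s = (\<Sum>i<k. alpha j i *\<^sub>R Hf (j-i) (k-1-i) s) + beta j k *\<^sub>R Gx (j-k) s"
definition Ed :: "nat \<Rightarrow> nat \<Rightarrow> real \<Rightarrow> complex" where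
  "Ed j k s = (\<Sum>i<k. alpha j i *\<^sub>R Hf (j-i) (k-i) s)
     + beta j k *\<^sub>R (2^(j-k) *\<^sub>R Hf (j-k) 0 s - (2 * real (j-k)) *\<^sub>R Gx (j-k-1) s)"

lemma Ek_deriv:
  assumes s: "0 < s" "s < 1"
  shows "(Ek j k has_vector_derivative s *\<^sub>R Ed j k s) (at s)"
proof -
  have "(Ek j k has_vector_derivative (\<Sum>i<k. alpha j i *\<^sub>R (s *\<^sub>R Hf (j-i) (Suc (k-1-i)) s))
      + beta j k *\<^sub>R ((2^(j-k)*(1-s)^(j-k+1)) *\<^sub>R fd 0 (1-s) - (2 * real (j-k) * s) *\<^sub>R Gx (j-k-1) s)) (at s)"
    unfolding Ek_def[abs_def]
    by (intro has_vector_derivative_add has_vector_derivative_sum hvd_scaleR_const Hf_deriv Gx_deriv s)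
  moreover have "(\<Sum>i<k. alpha j i *\<^sub>R (s *\<^sub>R Hf (j-i) (Suc (k-1-i)) s))
      + beta j k *\<^sub>R ((2^(j-k)*(1-s)^(j-k+1)) *\<^sub>R fd 0 (1-s) - (2 * real (j-k) * s) *\<^sub>R Gx (j-k-1) s)
      = s *\<^sub>R Ed j k s"
  proof -
    have "(\<Sum>i<k. alpha j i *\<^sub>R (s *\<^sub>R Hf (j-i) (Suc (k-1-i)) s)) = s *\<^sub>R (\<Sum>i<k. alpha j i *\<^sub>R Hf (j-i) (k-i) s)"
      unfolding scaleR_sum_right by (intro sum.cong refl) (auto simp: Suc_diff_Suc scaleR_scaleR mult.commute)
    moreover have "(2^(j-k)*(1-s)^(j-k+1)) *\<^sub>R fd 0 (1-s) = s *\<^sub>R (2^(j-k) *\<^sub>R Hf (j-k) 0 s)"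
      using s by (intro Hf0) auto
    ultimately show ?thesis unfolding Ed_def
      by (simp add: scaleR_add_right scaleR_diff_right scaleR_scaleR algebra_simps)
  qed
  ultimately show ?thesis by simp
qed

lemma Ed_Ek: "k < j \<Longrightarrow> Ed j k s = Ek j (Suc k) s"
proof -
  assume kj: "k < j"
  have a: "alpha j k = beta j k * 2^(j-k)" unfolding alpha_def beta_def by simp
  have b: "beta j (Suc k) = - beta j k * (2 * real (j-k))" unfolding beta_def using kj
    by (simp add: of_nat_diff algebra_simps)
  have c: "j - k - 1 = j - Suc k" by simp
  have d: "(\<Sum>i<k. alpha j i *\<^sub>R Hf (j-i) (Suc k - 1 - i) s) = (\<Sum>i<k. alpha j i *\<^sub>R Hf (j-i) (k-i) s)"
    by simp
  show ?thesis unfolding Ed_def Ek_def sum.lessThan_Suc d a b c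
    by (simp add: scaleR_diff_right scaleR_scaleR algebra_simps)
qed

lemma Ed_rr: "Ed r r s = (\<Sum>i\<le>r. alpha r i *\<^sub>R Hf (r-i) (r-i) s)"
proof -
  have a: "alpha r r = beta r r" unfolding alpha_def beta_def by simp
  show ?thesis unfolding Ed_def lessThan_Suc_atMost[symmetric] sum.lessThan_Suc a by simp
qed

lemma Dop_at:
  assumes eq: "\<And>y. y \<in> {0<..<1} \<Longrightarrow> \<phi> y = \<psi> y"
    and d: "(\<psi> has_vector_derivative \<psi>') (at s)" and s: "s \<in> {0<..<1}"
  shows "(\<phi> has_vector_derivative \<psi>') (at s)"
  using has_vector_derivative_transform_within_open[OF d open_greaterThanLessThan s] eq by metis

lemma Dk_eq:
  assumes f: "\<And>x. x \<ge> 0 \<Longrightarrow> fd 0 x = f x"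
  shows "k \<le> j \<Longrightarrow> s \<in> {0<..<1} \<Longrightarrow> (Dop ^^ k) (G0 f j) s = Ek j k s"
proof (induction k arbitrary: j s)
  case 0
  then show ?case unfolding Ek_def beta_def using G0_eq[OF f] by simp
next
  case (Suc k)
  have "((Dop ^^ k) (G0 f j) has_vector_derivative s *\<^sub>R Ed j k s) (at s)"
    by (rule Dop_at[where \<psi>="Ek j k"]) (use Suc in \<open>auto intro: Ek_deriv\<close>)
  then have "vector_derivative ((Dop ^^ k) (G0 f j)) (at s) = s *\<^sub>R Ed j k s"
    by (rule vector_derivative_at)
  moreover have "(Dop ^^ Suc k) (G0 f j) s = (1/s) *\<^sub>R vector_derivative ((Dop ^^ k) (G0 f j)) (at s)"
    by (simp only: funpow.simps o_apply Dop_def[of "(Dop ^^ k) (G0 f j)"])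
  ultimately show ?case using Suc.prems Ed_Ek[of k j s] by simp
qed


lemma per_l:
  assumes t: "t \<noteq> 0"
  shows "t *\<^sub>R Hf l l t = ((-1)^l * fact l) *\<^sub>R (\<Sum>m=0..l. \<Sum>n=m..l. complex_of_real (Xc t m n l) * fd m (1-t))"
proof -
  define K where "K q p = t * ((-1)^q * W l q / t^(1+l+q)) * (-1)^(l-q) * (real ((l-q) choose p) * ffr (l+1) p * (1-t)^(l+1-p))" for q p
  have 1: "t *\<^sub>R Hf l l t = (\<Sum>q\<le>l. \<Sum>p\<le>l-q. K q p *\<^sub>R fd (l-q-p) (1-t))"
    unfolding Hf_def HH_def Af_def scaleR_sum_right K_def
    by (intro sum.cong refl) (simp add: scaleR_scaleR ac_simps)
  also have "\<dots> = (\<Sum>(q,p)\<in>(SIGMA q:{..l}. {..l-q}). K q p *\<^sub>R fd (l-q-p) (1-t))"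
    by (simp add: sum.Sigma)
  also have "\<dots> = (\<Sum>(m,n)\<in>(SIGMA m:{0..l}. {m..l}). ((-1)^l * fact l) *\<^sub>R (complex_of_real (Xc t m n l) * fd m (1-t)))"
  proof (rule sum.reindex_bij_witness[where i="\<lambda>(m,n). (n-m, l-n)" and j="\<lambda>(q,p). (l-q-p, l-p)"])
    fix a assume a: "a \<in> (SIGMA q:{..l}. {..l-q})"
    obtain q p where qp: "a = (q,p)" by (cases a)
    with a have pq: "p + q \<le> l" by auto
    show "(case case a of (q, p) \<Rightarrow> (l - q - p, l - p) of (m, n) \<Rightarrow> ((-1)^l * fact l) *\<^sub>R (complex_of_real (Xc t m n l) * fd m (1-t)))
        = (case a of (q, p) \<Rightarrow> K q p *\<^sub>R fd (l-q-p) (1-t))"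
    proof -
      have Kq: "K q p = (-1)^l * fact l * Xc t (l-q-p) (l-p) l"
        using scal[OF t pq] unfolding K_def .
      show ?thesis unfolding qp case_prod_conv Kq
        by (simp only: scaleR_conv_of_real[symmetric] scaleR_scaleR)
    qed
  qed auto
  also have "\<dots> = ((-1)^l * fact l) *\<^sub>R (\<Sum>m=0..l. \<Sum>n=m..l. complex_of_real (Xc t m n l) * fd m (1-t))"
    by (simp add: sum.Sigma scaleR_sum_right split_beta)
  finally show ?thesis .
qed

lemma alpha_coef: "l \<le> r \<Longrightarrow> alpha r (r-l) * ((-1)^l * fact l) = 2^r * (-1)^r * fact r"
proof -
  assume lr: "l \<le> r"
  define d where "d = r - l"
  have r: "r = l + d" using lr unfolding d_def by simp
  have "ffr r (r-l) = fact r / fact l" using ffr_fact[of "r-l" r] lr by simp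
  then have "alpha r (r-l) * ((-1)^l * fact l) = (-2)^d * 2^l * (-1)^l * fact r"
    unfolding alpha_def using r by simp
  also have "\<dots> = 2^r * (-1)^r * fact r"
  proof -
    have m2: "(-2::real)^d = (-1)^d * 2^d" by (simp flip: power_mult_distrib)
    show ?thesis using r by (simp add: m2 power_add algebra_simps)
  qed
  finally show ?thesis .
qed

lemma main_sum:
  assumes t: "t \<noteq> 0"
  shows "t *\<^sub>R (\<Sum>i\<le>r. alpha r i *\<^sub>R Hf (r-i) (r-i) t)
     = complex_of_real (2 ^ r * (-1) ^ r * fact r) *
      (\<Sum>m = 0..r. \<Sum>n = m..r. \<Sum>l = n..r. complex_of_real (Xc t m n l) * fd m (1 - t))"
proof -
  have "t *\<^sub>R (\<Sum>i\<le>r. alpha r i *\<^sub>R Hf (r-i) (r-i) t) = (\<Sum>i\<le>r. alpha r i *\<^sub>R (t *\<^sub>R Hf (r-i) (r-i) t))"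
    by (simp add: scaleR_sum_right scaleR_scaleR mult.commute)
  also have "\<dots> = (\<Sum>l\<le>r. alpha r (r-l) *\<^sub>R (t *\<^sub>R Hf l l t))"
    by (rule sum.reindex_bij_witness[where i="\<lambda>i. r - i" and j="\<lambda>i. r - i"]) auto
  also have "\<dots> = (\<Sum>l\<le>r. (2^r * (-1)^r * fact r) *\<^sub>R (\<Sum>m=0..l. \<Sum>n=m..l. complex_of_real (Xc t m n l) * fd m (1-t)))"
    by (intro sum.cong refl) (simp add: per_l[OF t] scaleR_scaleR alpha_coef)
  also have "\<dots> = (2^r * (-1)^r * fact r) *\<^sub>R (\<Sum>l\<le>r. \<Sum>m=0..l. \<Sum>n=m..l. complex_of_real (Xc t m n l) * fd m (1-t))"
    by (simp add: scaleR_sum_right)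
  also have "\<dots> = (2^r * (-1)^r * fact r) *\<^sub>R (\<Sum>m = 0..r. \<Sum>n = m..r. \<Sum>l = n..r. complex_of_real (Xc t m n l) * fd m (1 - t))"
    by (simp only: swap3)
  finally show ?thesis by (simp add: scaleR_conv_of_real)
qed


end

theorem lemma3p5:
  fixes f :: "real \<Rightarrow> complex" and fd :: "nat \<Rightarrow> real \<Rightarrow> complex"
    and \<rho> t :: real and r :: nat
  assumes fd0: "\<And>x. x \<ge> 0 \<Longrightarrow> fd 0 x = f x"
    and fd_deriv: "\<And>n x. x \<ge> 0 \<Longrightarrow>
        (fd n has_vector_derivative fd (Suc n) x) (at x within {0..})"
    and supp: "\<And>u. u \<ge> 0 \<Longrightarrow> u > \<rho> \<Longrightarrow> f u = 0"
    and rho: "\<rho> < 1"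
    and t: "0 < t" "t < 1"
  shows "(((Dop ^^ r) (G0 f r)) has_vector_derivative
     (complex_of_real (2 ^ r * (-1) ^ r * fact r) *
      (\<Sum>m = 0..r. \<Sum>\<nu> = m..r. \<Sum>l = \<nu>..r.
         complex_of_real (1 / (2 ^ (\<nu> - m) * fact m)
           * real ((l + 1) choose (\<nu> + 1)) * real ((l + \<nu> - m) choose (\<nu> - m))
           * (1 / t ^ l) * ((1 - t) ^ (\<nu> + 1) / t ^ (\<nu> - m)))
         * fd m (1 - t)))) (at t)"
proof -
  interpret L fd
  proof
    fix n and x :: real assume x: "x > 0"
    have "at x within {0..} = at x" using x by (intro at_within_interior) auto
    then show "(fd n has_vector_derivative fd (Suc n) x) (at x)"
      using fd_deriv[of x n] x by simp
  next
    show "continuous_on {0..} (fd 0)"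
      by (rule continuous_on_vector_derivative[where f'="fd 1"]) (use fd_deriv in auto)
  qed
  have "((Dop ^^ r) (G0 f r) has_vector_derivative t *\<^sub>R Ed r r t) (at t)"
    by (rule Dop_at[where \<psi>="Ek r r"]) (use t in \<open>auto intro: Ek_deriv Dk_eq[OF fd0]\<close>)
  moreover have "t *\<^sub>R Ed r r t = complex_of_real (2 ^ r * (-1) ^ r * fact r) *
      (\<Sum>m = 0..r. \<Sum>n = m..r. \<Sum>l = n..r. complex_of_real (Xc t m n l) * fd m (1 - t))"
    unfolding Ed_rr using t by (intro main_sum) auto
  ultimately show ?thesis unfolding Xc_def by simp
qed

end
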